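(* Let $s\in\{+1,-1\}$, $\alpha\ge\beta\ge-\tfrac12$, $m\ge1$, and let $x_1$ be the largest zero of $p^{(\alpha+1,\beta)}_m$. Let $f\in\mathcal B_s(I;\alpha,\beta)\setminus\{0\}$ be a polynomial of degree at most $2m$, and if $s=+1$ assume also $f(1)=0$. Then $r(f;I)\ge1-x_1$, with equality if and only if $f$ is a positive multiple of $P(x)=(1-x)\,\frac{p^{(\alpha+1,\beta)}_m(x)^2}{x_1-x}$.
   Context: $I=[-1,1]$; $w_{\alpha,\beta}(x)=c_{\alpha,\beta}(1-x)^\alpha(1+x)^\beta$ on $I$ normalized to a probability density; $P^{(\alpha,\beta)}_n$ Jacobi polynomials (orthogonal for $w_{\alpha,\beta}$, $P^{(\alpha,\beta)}_n(1)=\binom{n+\alpha}{n}$), $p^{(\alpha,\beta)}_n$ their $L^2(w_{\alpha,\beta})$-normalizations; $\widehat f(n)=\int_I f\,p^{(\alpha,\beta)}_nw_{\alpha,\beta}dx$. $\mathcal B_s(I;\alpha,\beta)$: continuous real $f$ on $I$ with $\widehat f(0)\le0$, $\{s\widehat f(n)\}$ eventually nonnegative, $sf(1)\le0$. $r(f;I)=\inf\{r\in(0,2]: f(x)\ge0\text{ for }x\in[-1,1-r)\}$. *)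

theory Defs
  imports "HOL-Analysis.Analysis" "HOL-Computational_Algebra.Polynomial"
begin

definition jacobi_weight0 :: "real \<Rightarrow> real \<Rightarrow> real \<Rightarrow> real" where
  "jacobi_weight0 a b x = (1 - x) powr a * (1 + x) powr b"

definition jacobi_weight :: "real \<Rightarrow> real \<Rightarrow> real \<Rightarrow> real" where
  "jacobi_weight a b x =
     jacobi_weight0 a b x / integral {-1..1} (jacobi_weight0 a b)"

text \<open>Jacobi polynomial P_n^{(a,b)} (standard normalization, P_n(1) = binom(n+a, n)),
  via the explicit formula
  P_n(x) = sum_k binom(n+a, n-k) binom(n+b, k) ((x-1)/2)^k ((x+1)/2)^(n-k).\<close>
definition jacobiP :: "real \<Rightarrow> real \<Rightarrow> nat \<Rightarrow> real \<Rightarrow> real" where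
  "jacobiP a b n x =
     (\<Sum>k\<le>n. ((real n + a) gchoose (n - k)) * ((real n + b) gchoose k)
              * ((x - 1) / 2) ^ k * ((x + 1) / 2) ^ (n - k))"

definition jacobi_p :: "real \<Rightarrow> real \<Rightarrow> nat \<Rightarrow> real \<Rightarrow> real" where
  "jacobi_p a b n x =
     jacobiP a b n x /
       sqrt (integral {-1..1} (\<lambda>t. (jacobiP a b n t)\<^sup>2 * jacobi_weight a b t))"

definition jacobi_coeff :: "real \<Rightarrow> real \<Rightarrow> (real \<Rightarrow> real) \<Rightarrow> nat \<Rightarrow> real" where
  "jacobi_coeff a b f n =
     integral {-1..1} (\<lambda>x. f x * jacobi_p a b n x * jacobi_weight a b x)"

definition class_B :: "real \<Rightarrow> real \<Rightarrow> real \<Rightarrow> (real \<Rightarrow> real) \<Rightarrow> bool" where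
  "class_B s a b f \<longleftrightarrow>
     continuous_on {-1..1} f \<and>
     jacobi_coeff a b f 0 \<le> 0 \<and>
     (\<forall>\<^sub>F n in sequentially. s * jacobi_coeff a b f n \<ge> 0) \<and>
     s * f 1 \<le> 0"

definition r_I :: "(real \<Rightarrow> real) \<Rightarrow> real" where
  "r_I f = Inf {r \<in> {0<..2}. \<forall>x\<in>{-1..<1-r}. f x \<ge> 0}"

definition jacobi_max_zero :: "real \<Rightarrow> real \<Rightarrow> nat \<Rightarrow> real" where
  "jacobi_max_zero a b m = Max {x. jacobiP a b m x = 0}"

end

theory Submission
  imports Defs
begin


lemma powr_mult_pow: "(t::real) \<ge> 0 \<Longrightarrow> t powr a * t ^ k = t powr (a + real k)"
  by (cases "t = 0") (auto simp: powr_add powr_realpow)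

lemma beta11:
  fixes p q :: real
  assumes "p > -1" "q > -1"
  shows "(jacobi_weight0 p q has_integral (2 powr (p+q+1) * Beta (q+1) (p+1))) {-1..1}"
proof -
  have B: "((\<lambda>t. t powr ((q+1) - 1) * (1 - t) powr ((p+1) - 1)) has_integral Beta (q+1) (p+1)) (cbox 0 1)"
    using has_integral_Beta_real[of "q+1" "p+1"] assms by simp
  from has_integral_affinity'[OF B, of "1/2" "1/2"]
  have "((\<lambda>x. ((1/2) * x + 1/2) powr q * (1 - ((1/2) * x + 1/2)) powr p) has_integral (2 * Beta (q+1) (p+1))) {-1..1}"
    by (simp add: cbox_interval)
  hence "((\<lambda>x. 2 powr (p+q) * (((1/2) * x + 1/2) powr q * (1 - ((1/2) * x + 1/2)) powr p)) has_integral (2 powr (p+q) * (2 * Beta (q+1) (p+1)))) {-1..1}"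
    by (rule has_integral_mult_right)
  moreover have "2 powr (p+q) * (((1/2) * x + 1/2) powr q * (1 - ((1/2) * x + 1/2)) powr p) = jacobi_weight0 p q x"
    if "x \<in> {-1..1}" for x
  proof -
    have e1: "(1/2) * x + 1/2 = (1+x)/2" and e2: "1 - ((1/2) * x + 1/2) = (1-x)/2" by simp_all
    show ?thesis using that unfolding e1 e2 jacobi_weight0_def
      by (simp add: powr_divide powr_add field_simps)
  qed
  ultimately show ?thesis
    by (subst (asm) has_integral_cong[where g="jacobi_weight0 p q"]) (auto simp: powr_add algebra_simps)
qed


lemma W_shift1: "x \<in> {-1..1} \<Longrightarrow> (1+x)^j * jacobi_weight0 p q x = jacobi_weight0 p (q + real j) x"
  unfolding jacobi_weight0_def using powr_mult_pow[of "1+x" q j] by (simp add: algebra_simps)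

lemma W_shift2: "x \<in> {-1..1} \<Longrightarrow> (1-x)^j * jacobi_weight0 p q x = jacobi_weight0 (p + real j) q x"
  unfolding jacobi_weight0_def using powr_mult_pow[of "1-x" p j] by (simp add: algebra_simps)

lemma poly_basis1: "poly g (x::real) = (\<Sum>j\<le>degree g. coeff (pcompose g [:-1,1:]) j * (1+x)^j)"
proof -
  have "poly g x = poly (pcompose g [:-1,1:]) (1+x)" by (simp add: poly_pcompose algebra_simps)
  also have "\<dots> = (\<Sum>j\<le>degree g. coeff (pcompose g [:-1,1:]) j * (1+x)^j)"
    by (subst poly_altdef) (simp add: degree_pcompose)
  finally show ?thesis .
qed

definition BI :: "real \<Rightarrow> real \<Rightarrow> real" where
  "BI p q = 2 powr (p+q+1) * Beta (q+1) (p+1)"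

lemma beta11': "p > -1 \<Longrightarrow> q > -1 \<Longrightarrow> (jacobi_weight0 p q has_integral BI p q) {-1..1}"
  unfolding BI_def by (rule beta11)

lemma BI_pos: "p > -1 \<Longrightarrow> q > -1 \<Longrightarrow> BI p q > 0"
  unfolding BI_def Beta_def by (auto intro!: mult_pos_pos divide_pos_pos Gamma_real_pos)

lemma poly_W_has_integral:
  assumes "p > -1" "q > -1"
  shows "((\<lambda>x. poly g x * jacobi_weight0 p q x) has_integral
           (\<Sum>j\<le>degree g. coeff (pcompose g [:-1,1:]) j * BI p (q + real j))) {-1..1}"
proof -
  have "((\<lambda>x. \<Sum>j\<le>degree g. coeff (pcompose g [:-1,1:]) j * jacobi_weight0 p (q + real j) x) has_integral
           (\<Sum>j\<le>degree g. coeff (pcompose g [:-1,1:]) j * BI p (q + real j))) {-1..1}"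
    using assms by (intro has_integral_sum has_integral_mult_right) (auto simp: BI_def intro!: beta11)
  moreover have "(\<Sum>j\<le>degree g. coeff (pcompose g [:-1,1:]) j * jacobi_weight0 p (q + real j) x)
      = poly g x * jacobi_weight0 p q x" if "x \<in> {-1..1}" for x
    unfolding poly_basis1[of g x] sum_distrib_right
    by (intro sum.cong refl) (use W_shift1[OF that] in \<open>simp add: mult.assoc\<close>)
  ultimately show ?thesis
    by (subst (asm) has_integral_cong) auto
qed

lemma poly_W_integrable:
  assumes "p > -1" "q > -1"
  shows "(\<lambda>x. poly g x * jacobi_weight0 p q x) integrable_on {-1..1}"
  using poly_W_has_integral[OF assms] by blast

lemma W_nonneg: "jacobi_weight0 p q x \<ge> 0"
  unfolding jacobi_weight0_def by simp

lemma W_pos: "x \<in> {-1<..<1} \<Longrightarrow> jacobi_weight0 p q x > 0"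
  unfolding jacobi_weight0_def by simp

lemma poly_W_integral_pos:
  assumes "p > -1" "q > -1" "g \<noteq> 0" "\<And>x. x \<in> {-1..1} \<Longrightarrow> poly g x \<ge> 0"
  shows "integral {-1..1} (\<lambda>x. poly g x * jacobi_weight0 p q x) > 0"
proof -
  let ?f = "\<lambda>x. poly g x * jacobi_weight0 p q x"
  have int: "?f integrable_on {-1..1}" by (rule poly_W_integrable[OF assms(1,2)])
  have sub: "{-1/2..1/2::real} \<subseteq> {-1..1}" by auto
  have int2: "?f integrable_on {-1/2..1/2}"
    using integrable_on_subinterval[OF int sub] .
  have le: "integral {-1/2..1/2} ?f \<le> integral {-1..1} ?f"
    by (rule integral_subset_le[OF sub int2 int]) (auto intro!: mult_nonneg_nonneg W_nonneg assms(4))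
  have ge: "integral {-1/2..1/2} ?f \<ge> 0"
    by (rule integral_nonneg[OF int2]) (auto intro!: mult_nonneg_nonneg W_nonneg assms(4))
  have cont: "continuous_on {-1/2..1/2} ?f"
    unfolding jacobi_weight0_def by (intro continuous_intros) auto
  have "integral {-1/2..1/2} ?f \<noteq> 0"
  proof
    assume z: "integral {-1/2..1/2} ?f = 0"
    have "?f x = 0" if "x \<in> {-1/2..1/2}" for x
      apply (rule has_integral_0_cbox_imp_0[of "-1/2" "1/2" ?f])
      using cont that int2 z
      by (auto simp: cbox_interval box_real intro!: mult_nonneg_nonneg W_nonneg assms(4)
            dest: integrable_integral)
    hence "poly g x = 0" if "x \<in> {-1/2..1/2}" for x
      using that W_pos[of x p q] by fastforce
    hence "{-1/2..1/2::real} \<subseteq> {x. poly g x = 0}" by auto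
    moreover have "infinite {-1/2..1/2::real}" by simp
    ultimately show False using poly_roots_finite[OF assms(3)] finite_subset by blast
  qed
  with le ge show ?thesis by linarith
qed


lemma alt_binom_shift:
  fixes g :: "nat \<Rightarrow> real"
  shows "(\<Sum>k\<le>Suc n. (-1)^k * real (Suc n choose k) * g k) =
         (\<Sum>k\<le>n. (-1)^k * real (n choose k) * (g k - g (Suc k)))"
proof -
  have e: "real (Suc n choose k) = real (n choose k) + (case k of 0 \<Rightarrow> 0 | Suc k' \<Rightarrow> real (n choose k'))" for k
    by (cases k) auto
  have s1: "(\<Sum>k\<le>Suc n. (-1)^k * real (n choose k) * g k) = (\<Sum>k\<le>n. (-1)^k * real (n choose k) * g k)"
    by simp
  have s2: "(\<Sum>k\<le>Suc n. (-1)^k * (case k of 0 \<Rightarrow> 0 | Suc k' \<Rightarrow> real (n choose k')) * g k)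
      = - (\<Sum>k\<le>n. (-1)^k * real (n choose k) * g (Suc k))"
    by (subst sum.atMost_Suc_shift) (simp add: sum_negf[symmetric])
  have "(\<Sum>k\<le>Suc n. (-1)^k * real (Suc n choose k) * g k) =
     (\<Sum>k\<le>Suc n. (-1)^k * real (n choose k) * g k) +
     (\<Sum>k\<le>Suc n. (-1)^k * (case k of 0 \<Rightarrow> 0 | Suc k' \<Rightarrow> real (n choose k')) * g k)"
    unfolding e by (simp add: algebra_simps sum.distrib)
  also have "\<dots> = (\<Sum>k\<le>n. (-1)^k * real (n choose k) * (g k - g (Suc k)))"
    unfolding s1 s2 by (simp add: algebra_simps sum_subtractf)
  finally show ?thesis .
qed

lemma poch_diff: "pochhammer (y::real) (Suc j) - pochhammer (y - 1) (Suc j) = real (Suc j) * pochhammer y j"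
proof -
  have "pochhammer (y - 1) (Suc j) = (y - 1) * pochhammer y j"
    by (simp add: pochhammer_rec)
  moreover have "pochhammer y (Suc j) = (y + real j) * pochhammer y j" by (simp add: pochhammer_rec')
  ultimately show ?thesis by (simp add: algebra_simps)
qed

lemma alt_binom_poch:
  "j < n \<Longrightarrow> (\<Sum>k\<le>n. (-1)^k * real (n choose k) * pochhammer (c - real k) j) = 0"
proof (induction n arbitrary: c j)
  case 0 then show ?case by simp
next
  case (Suc n)
  show ?case
  proof (cases j)
    case 0
    then show ?thesis by (subst alt_binom_shift) simp
  next
    case (Suc j')
    have "(\<Sum>k\<le>Suc n. (-1)^k * real (Suc n choose k) * pochhammer (c - real k) j)
        = (\<Sum>k\<le>n. (-1)^k * real (n choose k) * (real (Suc j') * pochhammer (c - real k) j'))"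
      apply (subst alt_binom_shift)
      using poch_diff[of "c - real _" j'] by (simp add: Suc algebra_simps)
    also have "\<dots> = real (Suc j') * (\<Sum>k\<le>n. (-1)^k * real (n choose k) * pochhammer (c - real k) j')"
      by (simp add: sum_distrib_left algebra_simps)
    also have "\<dots> = 0" using Suc.IH[of j' c] Suc.prems Suc by simp
    finally show ?thesis .
  qed
qed


lemma pos_not_npi: "(z::real) > 0 \<Longrightarrow> z \<notin> \<int>\<^sub>\<le>\<^sub>0"
  by auto

lemma gchoose_Gamma1:
  assumes "k \<le> n" "a > -1"
  shows "((real n + a) gchoose (n-k)) * Gamma (a + real k + 1) = Gamma (a + real n + 1) / fact (n-k)"
proof -
  have z: "a + real k + 1 > 0" using assms by simp
  have "(real n + a) gchoose (n-k) = pochhammer (a + real k + 1) (n-k) / fact (n-k)"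
    using assms(1) by (simp add: gbinomial_pochhammer' of_nat_diff algebra_simps)
  also have "pochhammer (a + real k + 1) (n-k) = Gamma (a + real n + 1) / Gamma (a + real k + 1)"
    using pochhammer_Gamma[OF pos_not_npi[OF z], of "n-k"] assms(1) by (simp add: of_nat_diff algebra_simps)
  finally show ?thesis using Gamma_real_pos[OF z] by (simp add: field_simps)
qed

lemma gchoose_Gamma2:
  assumes "k \<le> n" "b > -1"
  shows "((real n + b) gchoose k) * Gamma (b + real (n-k) + real j + 1)
       = Gamma (b + real n + 1) / fact k * pochhammer (b + real n + 1 - real k) j"
proof -
  define z where "z = b + real n + 1 - real k"
  have z: "z > 0" using assms unfolding z_def by simp
  have "(real n + b) gchoose k = pochhammer z k / fact k"
    by (simp add: gbinomial_pochhammer' z_def algebra_simps)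
  also have "pochhammer z k = Gamma (b + real n + 1) / Gamma z"
    using pochhammer_Gamma[OF pos_not_npi[OF z], of k] by (simp add: z_def)
  finally have 1: "(real n + b) gchoose k = Gamma (b + real n + 1) / Gamma z / fact k" by simp
  have 2: "Gamma (b + real (n-k) + real j + 1) = pochhammer z j * Gamma z"
    using pochhammer_Gamma[OF pos_not_npi[OF z], of j] Gamma_real_pos[OF z] assms(1)
    by (simp add: z_def of_nat_diff algebra_simps)
  show ?thesis unfolding 1 2 using Gamma_real_pos[OF z] by (simp add: z_def field_simps)
qed

lemma jac_term:
  assumes "x \<in> {-1..1}" "k \<le> n"
  shows "((x - 1)/2)^k * ((x+1)/2)^(n-k) * (1+x)^j * jacobi_weight0 a b x
     = (-1)^k / 2^n * jacobi_weight0 (a + real k) (b + real (n-k) + real j) x"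
proof -
  have "((x - 1)/2)^k = (-1)^k * (1-x)^k / 2^k"
    by (simp add: power_divide power_minus[symmetric])
  moreover have "((x+1)/2)^(n-k) = (1+x)^(n-k) / 2^(n-k)" by (simp add: power_divide add.commute)
  moreover have "(2::real)^k * 2^(n-k) = 2^n" using assms(2) by (simp flip: power_add)
  moreover have "(1+x)^(n-k) * ((1+x)^j * jacobi_weight0 a b x) = jacobi_weight0 a (b + real (n-k) + real j) x"
    using W_shift1[OF assms(1)] by (simp add: power_add[symmetric] algebra_simps)
  moreover have "(1-x)^k * jacobi_weight0 a (b + real (n-k) + real j) x = jacobi_weight0 (a + real k) (b + real (n-k) + real j) x"
    using W_shift2[OF assms(1)] by simp
  ultimately show ?thesis
    by (simp add: field_simps) (metis (no_types, lifting) mult.assoc mult.left_commute)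
qed


lemma jac_orth_mono:
  assumes "a > -1" "b > -1" "j < n"
  shows "((\<lambda>x. jacobiP a b n x * (1+x)^j * jacobi_weight0 a b x) has_integral 0) {-1..1}"
proof -
  define c where "c k = ((real n + a) gchoose (n-k)) * ((real n + b) gchoose k)" for k
  define M where "M = 2 powr (a+b+real n+real j+1) / Gamma (a+b+real n+real j+2) / 2^n
      * (Gamma (a + real n + 1) * Gamma (b + real n + 1)) / fact n"
  have int: "((\<lambda>x. \<Sum>k\<le>n. c k * ((-1)^k / 2^n * jacobi_weight0 (a + real k) (b + real (n-k) + real j) x))
     has_integral (\<Sum>k\<le>n. c k * ((-1)^k / 2^n * BI (a + real k) (b + real (n-k) + real j)))) {-1..1}"
    using assms by (intro has_integral_sum has_integral_mult_right beta11') auto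
  have pw: "jacobiP a b n x * (1+x)^j * jacobi_weight0 a b x =
      (\<Sum>k\<le>n. c k * ((-1)^k / 2^n * jacobi_weight0 (a + real k) (b + real (n-k) + real j) x))"
    if "x \<in> {-1..1}" for x
    unfolding jacobiP_def sum_distrib_right
  proof (intro sum.cong refl)
    fix k assume "k \<in> {..n}"
    hence k: "k \<le> n" by simp
    show "((real n + a gchoose (n - k)) * (real n + b gchoose k) * ((x - 1) / 2) ^ k * ((x + 1) / 2) ^ (n - k))
      * (1 + x) ^ j * jacobi_weight0 a b x =
      c k * ((-1)^k / 2^n * jacobi_weight0 (a + real k) (b + real (n-k) + real j) x)"
      unfolding c_def jac_term[OF that k, symmetric] by (simp add: mult.assoc)
  qed
  have val: "c k * ((-1)^k / 2^n * BI (a + real k) (b + real (n-k) + real j))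
      = M * ((-1)^k * real (n choose k) * pochhammer (b + real n + 1 - real k) j)" if "k \<le> n" for k
  proof -
    have e1: "a + real k + (b + real (n-k) + real j) + 1 = a+b+real n+real j+1"
      using that by (simp add: of_nat_diff)
    have e2: "b + real (n-k) + real j + 1 + (a + real k + 1) = a+b+real n+real j+2"
      using that by (simp add: of_nat_diff)
    have BI: "BI (a + real k) (b + real (n-k) + real j) = 2 powr (a+b+real n+real j+1)
        / Gamma (a+b+real n+real j+2) * (Gamma (b + real (n-k) + real j + 1) * Gamma (a + real k + 1))"
      unfolding BI_def Beta_def e1 e2 by simp
    have g: "c k * (Gamma (b + real (n-k) + real j + 1) * Gamma (a + real k + 1)) =
        (Gamma (a + real n + 1) / fact (n-k)) * (Gamma (b + real n + 1) / fact k * pochhammer (b + real n + 1 - real k) j)"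
      unfolding c_def using gchoose_Gamma1[OF that assms(1)] gchoose_Gamma2[OF that assms(2), of j]
      by (metis (no_types, lifting) mult.assoc mult.commute)
    have bf: "real (n choose k) = fact n / (fact k * fact (n-k))" using binomial_fact[OF that] by simp
    define P where "P = 2 powr (a+b+real n+real j+1)"
    define G where "G = Gamma (a+b+real n+real j+2)"
    have "c k * ((-1)^k / 2^n * BI (a + real k) (b + real (n-k) + real j))
        = (-1)^k / 2^n * (P / G) * (c k * (Gamma (b + real (n-k) + real j + 1) * Gamma (a + real k + 1)))"
      unfolding BI P_def G_def by (simp add: mult_ac)
    also have "\<dots> = (-1)^k / 2^n * (P / G) * ((Gamma (a + real n + 1) / fact (n-k)) * (Gamma (b + real n + 1) / fact k * pochhammer (b + real n + 1 - real k) j))"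
      using g by simp
    also have "\<dots> = M * ((-1)^k * real (n choose k) * pochhammer (b + real n + 1 - real k) j)"
      unfolding M_def bf P_def G_def by (simp add: field_simps)
    finally show ?thesis .
  qed
  have "(\<Sum>k\<le>n. c k * ((-1)^k / 2^n * BI (a + real k) (b + real (n-k) + real j)))
     = M * (\<Sum>k\<le>n. (-1)^k * real (n choose k) * pochhammer (b + real n + 1 - real k) j)"
    unfolding sum_distrib_left by (intro sum.cong refl) (use val in auto)
  also have "\<dots> = 0" using alt_binom_poch[OF assms(3)] by simp
  finally have "(\<Sum>k\<le>n. c k * ((-1)^k / 2^n * BI (a + real k) (b + real (n-k) + real j))) = 0" .
  with int pw show ?thesis
    by (subst has_integral_cong[where g="\<lambda>x. \<Sum>k\<le>n. c k * ((-1)^k / 2^n * jacobi_weight0 (a + real k) (b + real (n-k) + real j) x)"]) auto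
qed


lemma linpow_nz: "[:-z,1:]^k \<noteq> (0::real poly)"
  by simp

lemma prod_linpow_nz: "(\<Prod>w\<in>S. [:-w,1:]^(k w)) \<noteq> (0::real poly)"
  by (induction S rule: infinite_finite_induct) auto

lemma degree_prod_linpow:
  "finite S \<Longrightarrow> degree (\<Prod>w\<in>S. [:-w,1:]^(k w) :: real poly) = (\<Sum>w\<in>S. k w)"
  by (subst degree_prod_eq_sum_degree) (auto simp: degree_linear_power)

lemma order_linpow: "order z ([:-w,1:]^k :: real poly) = (if z = w then k else 0)"
proof (cases "z = w")
  case True then show ?thesis by (simp add: order_power_n_n)
next
  case False
  then have "poly ([:-w,1:]^k) z \<noteq> 0" by simp
  then show ?thesis using False order_root by (metis (no_types, lifting) order_0I)
qed

lemma order_prod_linpow: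
  "finite S \<Longrightarrow> order z (\<Prod>w\<in>S. [:-w,1:]^(k w) :: real poly) = (if z \<in> S then k z else 0)"
proof (induction S rule: finite_induct)
  case empty
  then show ?case by (simp add: order_0I)
next
  case (insert a S)
  have "order z (\<Prod>w\<in>insert a S. [:-w,1:]^(k w) :: real poly) =
      order z ([:-a,1:]^(k a) :: real poly) + order z (\<Prod>w\<in>S. [:-w,1:]^(k w) :: real poly)"
    using insert by (simp add: order_mult prod_linpow_nz)
  then show ?case using insert by (auto simp: order_linpow)
qed

lemma prod_linpow_dvd:
  fixes p :: "real poly"
  assumes "p \<noteq> 0" "finite S" "\<And>z. z \<in> S \<Longrightarrow> k z \<le> order z p"
  shows "(\<Prod>w\<in>S. [:-w,1:]^(k w)) dvd p"
  using assms(2,1,3)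
proof (induction S arbitrary: p rule: finite_induct)
  case empty then show ?case by simp
next
  case (insert a S)
  have "[:-a,1:]^(k a) dvd p" using insert.prems by (simp add: order_divides)
  then obtain p' where p': "p = [:-a,1:]^(k a) * p'" by (elim dvdE)
  have p'0: "p' \<noteq> 0" using p' insert.prems by auto
  have "order z p' = order z p" if "z \<in> S" for z
  proof -
    have "z \<noteq> a" using that insert by auto
    then show ?thesis using p' insert.prems(1) by (simp add: order_mult order_linpow)
  qed
  hence "(\<Prod>w\<in>S. [:-w,1:]^(k w)) dvd p'" using insert p'0 by auto
  then show ?case using p' insert by (simp add: mult_dvd_mono)
qed

lemma even_roots_sign:
  fixes h :: "real poly"
  assumes "h \<noteq> 0" "\<And>z. z \<in> {l<..<u} \<Longrightarrow> poly h z = 0 \<Longrightarrow> even (order z h)"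
  shows "(\<forall>x\<in>{l<..<u}. poly h x \<ge> 0) \<or> (\<forall>x\<in>{l<..<u}. poly h x \<le> 0)"
  using assms
proof (induction "degree h" arbitrary: h rule: less_induct)
  case less
  show ?case
  proof (cases "\<exists>z\<in>{l<..<u}. poly h z = 0")
    case True
    then obtain z where z: "z \<in> {l<..<u}" "poly h z = 0" by blast
    have "order z h \<noteq> 0" using z less.prems order_root by blast
    with less.prems(2)[OF z] have "2 \<le> order z h" by presburger
    hence "[:-z,1:]^2 dvd h" by (simp add: order_divides)
    then obtain h' where h': "h = [:-z,1:]^2 * h'" by (elim dvdE)
    have h'0: "h' \<noteq> 0" using h' less.prems by auto
    have deg: "degree h' < degree h" using h' h'0 by (simp add: degree_mult_eq degree_linear_power)
    have ev: "even (order z' h')" if "z' \<in> {l<..<u}" "poly h' z' = 0" for z'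
    proof -
      have "poly h z' = 0" using h' that by simp
      hence "even (order z' h)" using less.prems(2) that by blast
      moreover have "order z' h = order z' ([:-z,1:]^2) + order z' h'"
        using h' less.prems(1) by (simp add: order_mult)
      ultimately show ?thesis by (auto simp: order_linpow split: if_splits)
    qed
    from less.hyps[OF deg h'0 ev]
    have "(\<forall>x\<in>{l<..<u}. poly h' x \<ge> 0) \<or> (\<forall>x\<in>{l<..<u}. poly h' x \<le> 0)" by blast
    then show ?thesis
      unfolding h' by (auto intro: mult_nonneg_nonneg mult_nonneg_nonpos)
  next
    case False
    show ?thesis
    proof (rule ccontr)
      assume "\<not> ?thesis"
      then obtain x1 x2 where x: "x1 \<in> {l<..<u}" "x2 \<in> {l<..<u}" "poly h x1 < 0" "poly h x2 > 0"
        by (auto simp: not_le)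
      have cont: "continuous_on A (poly h)" for A by (intro continuous_intros)
      have "\<exists>x. min x1 x2 \<le> x \<and> x \<le> max x1 x2 \<and> poly h x = 0"
      proof (cases "x1 \<le> x2")
        case True
        then show ?thesis using IVT'[of "poly h" x1 0 x2, OF _ _ _ cont] x by auto
      next
        case f: False
        then show ?thesis using IVT2'[of "poly h" x1 0 x2, OF _ _ _ cont] x by auto
      qed
      then obtain x where "min x1 x2 \<le> x" "x \<le> max x1 x2" "poly h x = 0" by blast
      moreover have "x \<in> {l<..<u}" using calculation x by auto
      ultimately show False using False by blast
    qed
  qed
qed


lemma W_end1: "jacobi_weight0 p q 1 = 0" and W_end2: "jacobi_weight0 p q (-1) = 0"
  unfolding jacobi_weight0_def by simp_all

lemma poly_W_integral_pos':
  assumes "p > -1" "q > -1" "g \<noteq> 0" "\<And>x. x \<in> {-1<..<1} \<Longrightarrow> poly g x \<ge> 0"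
  shows "integral {-1..1} (\<lambda>x. poly g x * jacobi_weight0 p q x) > 0"
proof -
  let ?f = "\<lambda>x. poly g x * jacobi_weight0 p q x"
  have nn: "?f x \<ge> 0" if "x \<in> {-1..1}" for x
  proof (cases "x = 1 \<or> x = -1")
    case True then show ?thesis by (auto simp: W_end1 W_end2)
  next
    case False then show ?thesis using that assms(4)[of x] by (auto intro!: mult_nonneg_nonneg W_nonneg)
  qed
  have int: "?f integrable_on {-1..1}" by (rule poly_W_integrable[OF assms(1,2)])
  have sub: "{-1/2..1/2::real} \<subseteq> {-1..1}" by auto
  have int2: "?f integrable_on {-1/2..1/2}"
    using integrable_on_subinterval[OF int sub] .
  have le: "integral {-1/2..1/2} ?f \<le> integral {-1..1} ?f"
    by (rule integral_subset_le[OF sub int2 int]) (use nn in auto)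
  have ge: "integral {-1/2..1/2} ?f \<ge> 0"
    by (rule integral_nonneg[OF int2]) (use nn in auto)
  have cont: "continuous_on {-1/2..1/2} ?f"
    unfolding jacobi_weight0_def by (intro continuous_intros) auto
  have "integral {-1/2..1/2} ?f \<noteq> 0"
  proof
    assume z: "integral {-1/2..1/2} ?f = 0"
    have "?f x = 0" if "x \<in> {-1/2..1/2}" for x
      apply (rule has_integral_0_cbox_imp_0[of "-1/2" "1/2" ?f])
      using cont that int2 z nn
      by (auto simp: cbox_interval box_real dest: integrable_integral)
    hence "poly g x = 0" if "x \<in> {-1/2..1/2}" for x
      using that W_pos[of x p q] by fastforce
    hence "{-1/2..1/2::real} \<subseteq> {x. poly g x = 0}" by auto
    moreover have "infinite {-1/2..1/2::real}" by simp
    ultimately show False using poly_roots_finite[OF assms(3)] finite_subset by blast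
  qed
  with le ge show ?thesis by linarith
qed

definition JP :: "real \<Rightarrow> real \<Rightarrow> nat \<Rightarrow> real poly" where
  "JP a b n = (\<Sum>k\<le>n. smult (((real n + a) gchoose (n-k)) * ((real n + b) gchoose k))
                  ([:-1/2, 1/2:]^k * [:1/2, 1/2:]^(n-k)))"

lemma poly_JP: "poly (JP a b n) x = jacobiP a b n x"
  unfolding JP_def jacobiP_def by (simp add: poly_sum algebra_simps add_divide_distrib diff_divide_distrib)

lemma degree_JP: "degree (JP a b n) \<le> n"
  unfolding JP_def
proof (intro degree_sum_le)
  fix k assume "k \<in> {..n}"
  have "degree ([:-1/2, 1/2:]^k * [:1/2, 1/2:]^(n-k) :: real poly) \<le> k + (n-k)"
    by (rule order.trans[OF degree_mult_le add_mono]) (auto intro: order.trans[OF degree_power_le])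
  also have "\<dots> = n" using \<open>k \<in> {..n}\<close> by simp
  finally show "degree (smult (((real n + a) gchoose (n-k)) * ((real n + b) gchoose k))
                  ([:-1/2, 1/2:]^k * [:1/2, 1/2:]^(n-k))) \<le> n"
    by (rule order.trans[OF degree_smult_le])
qed simp

lemma JP_at1: "poly (JP a b n) 1 = (real n + a) gchoose n"
proof -
  have "poly (JP a b n) 1 = (\<Sum>k\<le>n. (if k = 0 then (real n + a) gchoose n else 0))"
    unfolding poly_JP jacobiP_def by (intro sum.cong refl) auto
  also have "\<dots> = (real n + a) gchoose n" by simp
  finally show ?thesis .
qed

lemma JP_at1_pos: "a > -1 \<Longrightarrow> poly (JP a b n) 1 > 0"
  unfolding JP_at1 gbinomial_pochhammer' by (auto intro!: divide_pos_pos pochhammer_pos)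

lemma JP_nz: "a > -1 \<Longrightarrow> JP a b n \<noteq> 0"
  using JP_at1_pos[of a b n] by (metis less_irrefl poly_0)

lemma JP_orth:
  assumes "a > -1" "b > -1" "degree g < n"
  shows "((\<lambda>x. poly (JP a b n * g) x * jacobi_weight0 a b x) has_integral 0) {-1..1}"
proof -
  have "((\<lambda>x. \<Sum>j\<le>degree g. coeff (pcompose g [:-1,1:]) j * (jacobiP a b n x * (1+x)^j * jacobi_weight0 a b x))
     has_integral (\<Sum>j\<le>degree g. coeff (pcompose g [:-1,1:]) j * 0)) {-1..1}"
    using assms by (intro has_integral_sum has_integral_mult_right jac_orth_mono) auto
  moreover have "(\<Sum>j\<le>degree g. coeff (pcompose g [:-1,1:]) j * (jacobiP a b n x * (1+x)^j * jacobi_weight0 a b x))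
     = poly (JP a b n * g) x * jacobi_weight0 a b x" for x
    unfolding poly_mult poly_JP poly_basis1[of g x] sum_distrib_left sum_distrib_right
    by (intro sum.cong refl) (simp add: mult_ac)
  ultimately show ?thesis by simp
qed


lemma JP_roots:
  fixes n :: nat
  assumes "a > -1" "b > -1"
  defines "Q \<equiv> JP a b n"
  defines "R \<equiv> {x\<in>{-1<..<1}. poly Q x = 0}"
  shows "finite R \<and> card R = n \<and> (\<exists>c. c \<noteq> 0 \<and> Q = smult c (\<Prod>w\<in>R. [:-w,1:]^1)) \<and> {x. poly Q x = 0} = R"
proof -
  have Q0: "Q \<noteq> 0" unfolding Q_def by (rule JP_nz[OF assms(1)])
  have fin: "finite R" unfolding R_def using poly_roots_finite[OF Q0] by (rule finite_subset[rotated]) auto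
  have ge: "card R \<ge> n"
  proof (rule ccontr)
    assume "\<not> card R \<ge> n"
    hence lt: "card R < n" by simp
    define S where "S = {z\<in>R. odd (order z Q)}"
    have finS: "finite S" using fin unfolding S_def by auto
    define g where "g = (\<Prod>w\<in>S. [:-w,1:]^1 :: real poly)"
    have "degree g = card S" unfolding g_def using degree_prod_linpow[OF finS, of "\<lambda>_. 1"] by simp
    also have "\<dots> \<le> card R" unfolding S_def using fin by (intro card_mono) auto
    finally have dg: "degree g < n" using lt by simp
    define h where "h = Q * g"
    have h0: "h \<noteq> 0" unfolding h_def g_def using Q0 prod_linpow_nz[of "\<lambda>_. 1" S] by simp
    have int0: "integral {-1..1} (\<lambda>x. poly h x * jacobi_weight0 a b x) = 0"
      unfolding h_def Q_def using JP_orth[OF assms(1,2) dg] by (rule integral_unique)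
    have ev: "even (order z h)" if "z \<in> {-1<..<1}" "poly h z = 0" for z
    proof -
      have oh: "order z h = order z Q + (if z \<in> S then 1 else 0)"
        unfolding h_def g_def using Q0 prod_linpow_nz[of "\<lambda>_. 1" S]
        using order_prod_linpow[OF finS, of z "\<lambda>_. 1"] by (simp add: order_mult)
      show ?thesis
      proof (cases "poly Q z = 0")
        case True
        hence "z \<in> R" unfolding R_def using that by auto
        hence "z \<in> S \<longleftrightarrow> odd (order z Q)" unfolding S_def by blast
        then show ?thesis unfolding oh by simp
      next
        case False
        hence "order z Q = 0" by (simp add: order_0I)
        moreover have "z \<notin> S" unfolding S_def R_def using False by auto
        ultimately show ?thesis unfolding oh by simp
      qed
    qed
    from even_roots_sign[OF h0 ev]
    have "(\<forall>x\<in>{-1<..<1}. poly h x \<ge> 0) \<or> (\<forall>x\<in>{-1<..<1}. poly h x \<le> 0)" by blast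
    then show False
    proof
      assume "\<forall>x\<in>{-1<..<1}. poly h x \<ge> 0"
      hence "integral {-1..1} (\<lambda>x. poly h x * jacobi_weight0 a b x) > 0"
        by (intro poly_W_integral_pos'[OF assms(1,2) h0]) auto
      with int0 show False by simp
    next
      assume "\<forall>x\<in>{-1<..<1}. poly h x \<le> 0"
      hence "integral {-1..1} (\<lambda>x. poly (-h) x * jacobi_weight0 a b x) > 0"
        using h0 by (intro poly_W_integral_pos'[OF assms(1,2)]) auto
      moreover have "integral {-1..1} (\<lambda>x. poly (-h) x * jacobi_weight0 a b x) =
          - integral {-1..1} (\<lambda>x. poly h x * jacobi_weight0 a b x)"
        by simp
      ultimately show False using int0 by simp
    qed
  qed
  have dvd: "(\<Prod>w\<in>R. [:-w,1:]^1) dvd Q"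
    using Q0 fin by (rule prod_linpow_dvd) (use Q0 in \<open>auto simp: R_def order_root\<close>)
  have degP: "degree (\<Prod>w\<in>R. [:-w,1:]^1 :: real poly) = card R"
    using degree_prod_linpow[OF fin, of "\<lambda>_. 1"] by simp
  have "card R \<le> degree Q" using dvd_imp_degree_le[OF dvd Q0] degP by simp
  moreover have "degree Q \<le> n" unfolding Q_def by (rule degree_JP)
  ultimately have cR: "card R = n" and dQ: "degree Q = n" using ge by auto
  obtain c where c: "Q = (\<Prod>w\<in>R. [:-w,1:]^1) * c" using dvd by (elim dvdE)
  have c0: "c \<noteq> 0" using c Q0 by auto
  have "degree Q = card R + degree c" using c c0 prod_linpow_nz[of "\<lambda>_. 1" R] degP
    by (simp add: degree_mult_eq)
  hence "degree c = 0" using cR dQ by simp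
  hence cc: "c = [:coeff c 0:]" by (rule degree_0_id[symmetric])
  have Qs: "Q = smult (coeff c 0) (\<Prod>w\<in>R. [:-w,1:]^1)"
    using c cc by (metis mult.commute mult.right_neutral smult_one mult_smult_right)
  have cz: "coeff c 0 \<noteq> 0" using c0 cc by (metis pCons_0_0)
  have "{x. poly Q x = 0} = R"
  proof -
    have "poly Q x = 0 \<longleftrightarrow> x \<in> R" for x
      unfolding Qs using cz fin by (simp add: poly_prod)
    then show ?thesis by auto
  qed
  with fin cR Qs cz show ?thesis by blast
qed


definition IW :: "real \<Rightarrow> real \<Rightarrow> real poly \<Rightarrow> real" where
  "IW a b g = integral {-1..1} (\<lambda>x. poly g x * jacobi_weight0 a b x)"

lemma IW_add: "a > -1 \<Longrightarrow> b > -1 \<Longrightarrow> IW a b (p + q) = IW a b p + IW a b q"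
  unfolding IW_def by (simp add: distrib_right integral_add poly_W_integrable)

lemma IW_smult: "IW a b (smult c p) = c * IW a b p"
  unfolding IW_def by (simp add: mult.assoc)

lemma IW_0: "IW a b 0 = 0"
  unfolding IW_def by simp

lemma IW_sum: "a > -1 \<Longrightarrow> b > -1 \<Longrightarrow> IW a b (\<Sum>y\<in>A. p y) = (\<Sum>y\<in>A. IW a b (p y))"
  by (induction A rule: infinite_finite_induct) (auto simp: IW_add IW_0)

definition lag :: "real set \<Rightarrow> real \<Rightarrow> real poly" where
  "lag N y = smult (1 / (\<Prod>z\<in>N-{y}. (y - z))) (\<Prod>z\<in>N-{y}. [:-z,1:])"

lemma poly_lag:
  assumes "finite N" "y \<in> N" "x \<in> N"
  shows "poly (lag N y) x = (if x = y then 1 else 0)"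
proof (cases "x = y")
  case True
  have "(\<Prod>z\<in>N-{y}. (y - z)) \<noteq> 0" using assms by auto
  then show ?thesis using True unfolding lag_def by (simp add: poly_prod)
next
  case False
  have "(\<Prod>z\<in>N-{y}. (x - z)) = 0" using assms False by (intro prod_zero) auto
  then show ?thesis using False unfolding lag_def by (simp add: poly_prod)
qed

lemma degree_lag:
  assumes "finite N" "y \<in> N"
  shows "degree (lag N y) \<le> card N - 1"
proof -
  have "degree (\<Prod>z\<in>N-{y}. [:-z,1:] :: real poly) = card (N - {y})"
    by (subst degree_prod_eq_sum_degree) auto
  then show ?thesis unfolding lag_def using assms
    by (metis card_Diff_singleton degree_smult_le order.trans order_refl)
qed

lemma W_shift_m1: "x \<in> {-1..1} \<Longrightarrow> (x - 1) * jacobi_weight0 a b x = - jacobi_weight0 (a+1) b x"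
  using W_shift2[of x 1 a b] by (simp add: algebra_simps)

lemma quad:
  fixes a b :: real and m :: nat and f :: "real poly"
  assumes ab: "a > -1" "b > -1"
  defines "Q \<equiv> JP (a+1) b m"
  defines "R \<equiv> {x\<in>{-1<..<1}. poly Q x = 0}"
  defines "N \<equiv> insert 1 R"
  assumes df: "degree f \<le> 2*m"
  shows "IW a b f = (\<Sum>y\<in>N. poly f y * IW a b (lag N y))"
proof -
  have a1: "a + 1 > -1" using ab by simp
  from JP_roots[OF a1 ab(2), of m]
  have finR: "finite R" and cR: "card R = m" and
    ex: "\<exists>c. c \<noteq> 0 \<and> Q = smult c (\<Prod>w\<in>R. [:-w,1:]^1)"
    unfolding Q_def R_def by blast+
  then obtain c where c0: "c \<noteq> 0" and Qc: "Q = smult c (\<Prod>w\<in>R. [:-w,1:])" by auto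
  have finN: "finite N" unfolding N_def using finR by simp
  have oneR: "1 \<notin> R" unfolding R_def by auto
  have cN: "card N = m + 1" unfolding N_def using finR oneR cR by simp
  define L where "L = (\<Sum>y\<in>N. smult (poly f y) (lag N y))"
  have polyL: "poly L x = poly f x" if "x \<in> N" for x
  proof -
    have "poly L x = (\<Sum>y\<in>N. poly f y * (if x = y then 1 else 0))"
      unfolding L_def poly_sum using that finN by (intro sum.cong refl) (simp add: poly_lag)
    also have "\<dots> = (\<Sum>y\<in>N. if y = x then poly f y else 0)" by (intro sum.cong) auto
    also have "\<dots> = poly f x" using that finN by (simp add: sum.delta)
    finally show ?thesis .
  qed
  have degL: "degree L \<le> m"
    unfolding L_def
  proof (rule degree_sum_le)
    fix y assume "y \<in> N"
    show "degree (smult (poly f y) (lag N y)) \<le> m"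
      using degree_lag[OF finN \<open>y \<in> N\<close>] cN by (metis add_diff_cancel_right' degree_smult_le order.trans)
  qed (use finN in auto)
  define D where "D = f - L"
  have ID: "IW a b D = 0"
  proof (cases "D = 0")
    case True then show ?thesis by (simp add: IW_0)
  next
    case False
    have "(\<Prod>w\<in>N. [:-w,1:]^1) dvd D"
    proof (rule prod_linpow_dvd[OF False finN])
      fix z assume "z \<in> N"
      hence "poly D z = 0" unfolding D_def using polyL by simp
      then show "1 \<le> order z D" using False order_root[of D z] by simp
    qed
    then obtain g where g: "D = (\<Prod>w\<in>N. [:-w,1:]) * g" by (auto elim: dvdE)
    have g0: "g \<noteq> 0" using g False by auto
    have PN: "(\<Prod>w\<in>N. [:-w,1:]) = [:-1,1:] * (\<Prod>w\<in>R. [:-w,1:])"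
      unfolding N_def using finR oneR by simp
    have degPN: "degree (\<Prod>w\<in>N. [:-w,1:] :: real poly) = m + 1"
      by (subst degree_prod_eq_sum_degree) (auto simp: cN)
    have "degree D \<le> 2*m" unfolding D_def using df degL
      using degree_diff_le_max[of f L] by simp
    moreover have "degree D = m + 1 + degree g"
      unfolding g using g0 degPN by (subst degree_mult_eq) auto
    ultimately have dg: "degree g < m" by simp
    have orth: "((\<lambda>x. poly (JP (a+1) b m * g) x * jacobi_weight0 (a+1) b x) has_integral 0) {-1..1}"
      by (rule JP_orth[OF a1 ab(2) dg])
    have pw: "poly D x * jacobi_weight0 a b x = (- 1 / c) * (poly (JP (a+1) b m * g) x * jacobi_weight0 (a+1) b x)"
      if "x \<in> {-1..1}" for x
    proof -
      have "poly (\<Prod>w\<in>R. [:-w,1:]) x = poly Q x / c" unfolding Qc using c0 by simp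
      hence "poly D x = (x - 1) * (poly Q x / c) * poly g x" unfolding g PN by (simp add: algebra_simps diff_divide_distrib)
      hence "poly D x * jacobi_weight0 a b x = ((x - 1) * jacobi_weight0 a b x) * (poly Q x / c) * poly g x"
        by (simp add: mult_ac)
      also have "\<dots> = (- 1 / c) * (poly (JP (a+1) b m * g) x * jacobi_weight0 (a+1) b x)"
        unfolding W_shift_m1[OF that] Q_def by (simp add: field_simps)
      finally show ?thesis .
    qed
    have "IW a b D = integral {-1..1} (\<lambda>x. (- 1 / c) * (poly (JP (a+1) b m * g) x * jacobi_weight0 (a+1) b x))"
      unfolding IW_def by (rule integral_cong) (rule pw)
    also have "\<dots> = 0" using integral_unique[OF orth] by simp
    finally show ?thesis .
  qed
  have "f = D + L" unfolding D_def by simp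
  hence "IW a b f = IW a b D + IW a b L" using IW_add[OF ab] by metis
  also have "\<dots> = (\<Sum>y\<in>N. poly f y * IW a b (lag N y))"
    unfolding ID L_def IW_sum[OF ab] IW_smult by simp
  finally show ?thesis .
qed


lemma quad_pos:
  fixes a b :: real and m :: nat
  assumes ab: "a > -1" "b > -1"
  defines "Q \<equiv> JP (a+1) b m"
  defines "R \<equiv> {x\<in>{-1<..<1}. poly Q x = 0}"
  defines "N \<equiv> insert 1 R"
  assumes y: "y \<in> N"
  shows "IW a b (lag N y) > 0"
proof -
  have a1: "a + 1 > -1" using ab by simp
  from JP_roots[OF a1 ab(2), of m]
  have finR: "finite R" and cR: "card R = m" unfolding Q_def R_def by blast+
  have finN: "finite N" unfolding N_def using finR by simp
  have oneR: "1 \<notin> R" unfolding R_def by auto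
  have cN: "card N = m + 1" unfolding N_def using finR oneR cR by simp
  have dl: "degree (lag N y) \<le> m" using degree_lag[OF finN y] cN by simp
  have "degree ((lag N y)^2) \<le> 2*m"
    using degree_power_le[of "lag N y" 2] dl by linarith
  hence "IW a b ((lag N y)^2) = (\<Sum>y'\<in>N. poly ((lag N y)^2) y' * IW a b (lag N y'))"
    unfolding N_def R_def Q_def by (rule quad[OF ab])
  also have "\<dots> = (\<Sum>y'\<in>N. if y' = y then IW a b (lag N y') else 0)"
  proof (intro sum.cong refl)
    fix y' assume "y' \<in> N"
    hence pl: "poly (lag N y) y' = (if y' = y then 1 else 0)" by (rule poly_lag[OF finN y])
    show "poly ((lag N y)^2) y' * IW a b (lag N y') = (if y' = y then IW a b (lag N y') else 0)"
      by (simp only: poly_power pl) simp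
  qed
  also have "\<dots> = IW a b (lag N y)" using finN y by (simp add: sum.delta)
  finally have e: "IW a b ((lag N y)^2) = IW a b (lag N y)" .
  have "lag N y \<noteq> 0" using poly_lag[OF finN y y] by auto
  hence "IW a b ((lag N y)^2) > 0" unfolding IW_def
    by (intro poly_W_integral_pos'[OF ab]) auto
  with e show ?thesis by simp
qed

lemma quad_zero:
  fixes a b :: real and m :: nat and f :: "real poly"
  assumes ab: "a > -1" "b > -1"
  defines "Q \<equiv> JP (a+1) b m"
  defines "R \<equiv> {x\<in>{-1<..<1}. poly Q x = 0}"
  defines "N \<equiv> insert 1 R"
  assumes df: "degree f \<le> 2*m" and I: "IW a b f \<le> 0" and nn: "\<And>y. y \<in> N \<Longrightarrow> poly f y \<ge> 0"
  shows "\<forall>y\<in>N. poly f y = 0"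
proof -
  have a1: "a + 1 > -1" using ab by simp
  from JP_roots[OF a1 ab(2), of m]
  have finR: "finite R" unfolding Q_def R_def by blast+
  have finN: "finite N" unfolding N_def using finR by simp
  have pos: "\<And>y. y \<in> N \<Longrightarrow> IW a b (lag N y) > 0"
    unfolding N_def R_def Q_def by (rule quad_pos[OF ab])
  have s: "(\<Sum>y\<in>N. poly f y * IW a b (lag N y)) \<le> 0"
    using quad[OF ab df] I unfolding N_def R_def Q_def by simp
  have nn2: "\<forall>y\<in>N. poly f y * IW a b (lag N y) \<ge> 0"
    using nn pos by (simp add: less_imp_le)
  have "(\<Sum>y\<in>N. poly f y * IW a b (lag N y)) = 0"
    by (intro antisym[OF s] sum_nonneg) (use nn2 in blast)
  hence z: "\<forall>y\<in>N. poly f y * IW a b (lag N y) = 0"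
    using sum_nonneg_eq_0_iff[OF finN, of "\<lambda>y. poly f y * IW a b (lag N y)"] nn2 by blast
  show ?thesis
  proof
    fix y assume "y \<in> N"
    with z pos have "poly f y * IW a b (lag N y) = 0" "IW a b (lag N y) > 0" by auto
    then show "poly f y = 0" by simp
  qed
qed

lemma poly_pos_near:
  fixes g :: "real poly"
  assumes "poly g z > 0"
  shows "\<exists>d>0. \<forall>x. \<bar>x - z\<bar> < d \<longrightarrow> poly g x > 0"
proof -
  have "isCont (poly g) z" by simp
  hence "(poly g \<longlongrightarrow> poly g z) (at z)" by (simp add: isCont_def)
  hence "eventually (\<lambda>x. poly g x > 0) (at z)"
    using assms by (rule order_tendstoD(1))
  then obtain d where d: "d > 0" "\<And>x. x \<noteq> z \<Longrightarrow> dist x z < d \<Longrightarrow> poly g x > 0"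
    unfolding eventually_at by auto
  show ?thesis
  proof (intro exI[of _ d] conjI allI impI)
    fix x :: real assume "\<bar>x - z\<bar> < d"
    then show "poly g x > 0" by (cases "x = z") (use d assms in \<open>auto simp: dist_real_def\<close>)
  qed (use d in auto)
qed

lemma poly_neg_near:
  fixes g :: "real poly"
  assumes "poly g z < 0"
  shows "\<exists>d>0. \<forall>x. \<bar>x - z\<bar> < d \<longrightarrow> poly g x < 0"
  using poly_pos_near[of "-g" z] assms by simp

lemma local_min_order:
  fixes f :: "real poly"
  assumes "f \<noteq> 0" "poly f z = 0" "l < z" "z < u" "\<And>x. x \<in> {l<..<u} \<Longrightarrow> poly f x \<ge> 0"
  shows "order z f \<ge> 2"
proof -
  obtain g where g: "f = [:-z,1:] * g" using assms(2) by (auto simp: poly_eq_0_iff_dvd elim: dvdE)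
  have "poly g z = 0"
  proof (rule ccontr)
    assume "poly g z \<noteq> 0"
    then consider "poly g z > 0" | "poly g z < 0" by linarith
    then show False
    proof cases
      case 1
      then obtain d where d: "d > 0" "\<And>x. \<bar>x - z\<bar> < d \<Longrightarrow> poly g x > 0" using poly_pos_near by blast
      obtain e where e: "e > 0" "e \<le> z - l" "e \<le> d" using d assms(3) by (intro that[of "min d (z - l)"]) auto
      define x where "x = z - e / 2"
      from e have "x \<in> {l<..<u}" "\<bar>x - z\<bar> < d" "x < z" using d assms(3,4) unfolding x_def by auto
      moreover have "poly f x = (x - z) * poly g x" unfolding g by (simp add: algebra_simps)
      ultimately have "poly f x < 0" using d(2) by (simp add: mult_neg_pos)
      with assms(5) \<open>x \<in> {l<..<u}\<close> show False by force
    next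
      case 2
      then obtain d where d: "d > 0" "\<And>x. \<bar>x - z\<bar> < d \<Longrightarrow> poly g x < 0" using poly_neg_near by blast
      obtain e where e: "e > 0" "e \<le> u - z" "e \<le> d" using d assms(4) by (intro that[of "min d (u - z)"]) auto
      define x where "x = z + e / 2"
      from e have "x \<in> {l<..<u}" "\<bar>x - z\<bar> < d" "x > z" using d assms(3,4) unfolding x_def by auto
      moreover have "poly f x = (x - z) * poly g x" unfolding g by (simp add: algebra_simps)
      ultimately have "poly f x < 0" using d(2) by (simp add: mult_pos_neg)
      with assms(5) \<open>x \<in> {l<..<u}\<close> show False by force
    qed
  qed
  then obtain h where "g = [:-z,1:] * h" by (auto simp: poly_eq_0_iff_dvd elim: dvdE)
  hence "f = [:-z,1:]^2 * h" using g by (simp only: power2_eq_square mult.assoc)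
  hence "[:-z,1:]^2 dvd f" by (metis dvd_triv_left)
  then show ?thesis using assms(1) by (simp add: order_divides)
qed


lemma setting:
  fixes a b :: real and m :: nat
  assumes ab: "a > -1" "b > -1" and m: "m \<ge> 1"
  defines "Q \<equiv> JP (a+1) b m"
  defines "R \<equiv> {x\<in>{-1<..<1}. poly Q x = 0}"
  shows "finite R" "card R = m" "R \<noteq> {}" "Max R \<in> R" "\<And>y. y \<in> R \<Longrightarrow> y \<le> Max R"
    "-1 < Max R" "Max R < 1" "1 \<notin> R" "{x. poly Q x = 0} = R"
    "\<exists>C. C \<noteq> 0 \<and> Q = smult C (\<Prod>w\<in>R. [:-w,1:])"
proof -
  have a1: "a + 1 > -1" using ab by simp
  from JP_roots[OF a1 ab(2), of m]
  have finR: "finite R" and cR: "card R = m" and ex: "\<exists>c. c \<noteq> 0 \<and> Q = smult c (\<Prod>w\<in>R. [:-w,1:]^1)"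
    and rt: "{x. poly Q x = 0} = R"
    unfolding Q_def R_def by blast+
  show "finite R" "card R = m" "{x. poly Q x = 0} = R" by fact+
  show "\<exists>C. C \<noteq> 0 \<and> Q = smult C (\<Prod>w\<in>R. [:-w,1:])" using ex by simp
  show ne: "R \<noteq> {}" using cR m by auto
  show mx: "Max R \<in> R" using finR ne by simp
  show "\<And>y. y \<in> R \<Longrightarrow> y \<le> Max R" using finR by simp
  show "-1 < Max R" "Max R < 1" using mx unfolding R_def by auto
  show "1 \<notin> R" unfolding R_def by auto
qed

lemma keyA:
  fixes a b :: real and m :: nat and f :: "real poly"
  assumes ab: "a > -1" "b > -1" and m: "m \<ge> 1"
  defines "Q \<equiv> JP (a+1) b m"
  defines "R \<equiv> {x\<in>{-1<..<1}. poly Q x = 0}"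
  assumes df: "degree f \<le> 2*m" and I: "IW a b f \<le> 0" and f1: "poly f 1 \<ge> 0" and f0: "f \<noteq> 0"
    and t: "t > Max R" and nn: "\<forall>x\<in>{-1..<t}. poly f x \<ge> 0"
  shows False
proof -
  note st = setting[OF ab m, folded Q_def, folded R_def]
  define N where "N = insert 1 R"
  have nnN: "poly f y \<ge> 0" if "y \<in> N" for y
  proof (cases "y = 1")
    case True with f1 show ?thesis by simp
  next
    case False
    hence "y \<in> R" using that N_def by auto
    hence "-1 < y" "y < t" using st(5)[of y] t unfolding R_def by auto
    then show ?thesis using nn by auto
  qed
  have zero: "\<forall>y\<in>N. poly f y = 0"
    using quad_zero[OF ab df I] nnN unfolding N_def R_def Q_def by blast
  define k where "k y = (if y = 1 then 1 else 2::nat)" for y :: real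
  have finN: "finite N" unfolding N_def using st(1) by simp
  have "(\<Prod>w\<in>N. [:-w,1:]^(k w)) dvd f"
  proof (rule prod_linpow_dvd[OF f0 finN])
    fix z assume z: "z \<in> N"
    show "k z \<le> order z f"
    proof (cases "z = 1")
      case True
      then show ?thesis using zero z f0 order_root[of f z] by (simp add: k_def)
    next
      case False
      hence "z \<in> R" using z N_def by auto
      hence "-1 < z" "z < t" using st(5)[of z] t unfolding R_def by auto
      hence "order z f \<ge> 2"
        using zero z by (intro local_min_order[OF f0, of z "-1" t]) (use nn in auto)
      then show ?thesis using False by (simp add: k_def)
    qed
  qed
  hence "degree (\<Prod>w\<in>N. [:-w,1:]^(k w) :: real poly) \<le> degree f" using f0 by (rule dvd_imp_degree_le)
  moreover have "degree (\<Prod>w\<in>N. [:-w,1:]^(k w) :: real poly) = 2*m + 1"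
  proof -
    have "degree (\<Prod>w\<in>N. [:-w,1:]^(k w) :: real poly) = (\<Sum>w\<in>N. k w)" by (rule degree_prod_linpow[OF finN])
    also have "\<dots> = k 1 + (\<Sum>w\<in>R. k w)" unfolding N_def using st(1,8) by simp
    also have "(\<Sum>w\<in>R. k w) = (\<Sum>w\<in>R. 2)" using st(8) by (intro sum.cong refl) (auto simp: k_def)
    finally show ?thesis using st(2) by (simp add: k_def)
  qed
  ultimately show False using df by simp
qed


lemma keyB:
  fixes a b :: real and m :: nat and f :: "real poly"
  assumes ab: "a > -1" "b > -1" and m: "m \<ge> 1"
  defines "Q \<equiv> JP (a+1) b m"
  defines "R \<equiv> {x\<in>{-1<..<1}. poly Q x = 0}"
  assumes df: "degree f \<le> 2*m" and I: "IW a b f \<le> 0" and f1: "poly f 1 \<ge> 0" and f0: "f \<noteq> 0"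
    and nn: "\<forall>x\<in>{-1..<Max R}. poly f x \<ge> 0"
  shows "\<exists>c0>0. \<forall>x. poly f x = c0 * ((x - 1) * (x - Max R) * (\<Prod>y\<in>R-{Max R}. (x - y)^2))"
proof -
  note st = setting[OF ab m, folded Q_def, folded R_def]
  define x1 where "x1 = Max R"
  have x1R: "x1 \<in> R" and x1lt: "-1 < x1" "x1 < 1" using st unfolding x1_def by auto
  have fx1: "poly f x1 \<ge> 0"
  proof (rule ccontr)
    assume "\<not> poly f x1 \<ge> 0"
    then obtain d where d: "d > 0" "\<And>x. \<bar>x - x1\<bar> < d \<Longrightarrow> poly f x < 0" using poly_neg_near[of f x1] by auto
    obtain e where e: "e > 0" "e \<le> x1 + 1" "e \<le> d" using d x1lt by (intro that[of "min d (x1 + 1)"]) auto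
    have "x1 - e/2 \<in> {-1..<x1}" "\<bar>(x1 - e/2) - x1\<bar> < d" using e by auto
    hence "poly f (x1 - e/2) \<ge> 0" "poly f (x1 - e/2) < 0" using nn d(2) unfolding x1_def by auto
    then show False by simp
  qed
  define N where "N = insert 1 R"
  have nnN: "poly f y \<ge> 0" if "y \<in> N" for y
  proof (cases "y = 1")
    case True with f1 show ?thesis by simp
  next
    case False
    hence "y \<in> R" using that N_def by auto
    hence "-1 < y" "y \<le> x1" using st(5)[of y] unfolding R_def x1_def by auto
    then show ?thesis using nn fx1 unfolding x1_def by (cases "y = Max R") auto
  qed
  have zero: "\<forall>y\<in>N. poly f y = 0"
    using quad_zero[OF ab df I] nnN unfolding N_def R_def Q_def by blast
  define A where "A = R - {x1}"
  define k where "k y = (if y \<in> A then 2 else 1::nat)" for y :: real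
  have finN: "finite N" unfolding N_def using st(1) by simp
  have finA: "finite A" unfolding A_def using st(1) by simp
  define P where "P = (\<Prod>w\<in>N. [:-w,1:]^(k w) :: real poly)"
  have "P dvd f" unfolding P_def
  proof (rule prod_linpow_dvd[OF f0 finN])
    fix z assume z: "z \<in> N"
    show "k z \<le> order z f"
    proof (cases "z \<in> A")
      case False
      then show ?thesis using zero z f0 order_root[of f z] by (simp add: k_def)
    next
      case True
      hence "z \<in> R" "z \<noteq> x1" using A_def by auto
      hence "-1 < z" "z < x1" using st(5)[of z] unfolding R_def x1_def by auto
      hence "order z f \<ge> 2"
        using zero z by (intro local_min_order[OF f0, of z "-1" x1]) (use nn in \<open>auto simp: x1_def\<close>)
      then show ?thesis using True by (simp add: k_def)
    qed
  qed
  then obtain c where c: "f = P * c" by (elim dvdE)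
  have P0: "P \<noteq> 0" unfolding P_def by (rule prod_linpow_nz)
  have c0: "c \<noteq> 0" using c f0 by auto
  have NA: "N = insert 1 (insert x1 A)" unfolding N_def A_def using x1R by auto
  have oneA: "1 \<notin> insert x1 A" using st(8) x1R unfolding A_def by auto
  have x1A: "x1 \<notin> A" unfolding A_def by simp
  have cA: "card A = m - 1" unfolding A_def using st(1,2) x1R by simp
  have degP: "degree P = 2*m"
  proof -
    have "degree P = (\<Sum>w\<in>N. k w)" unfolding P_def by (rule degree_prod_linpow[OF finN])
    also have "\<dots> = k 1 + (k x1 + (\<Sum>w\<in>A. k w))" unfolding NA using oneA x1A finA by simp
    also have "(\<Sum>w\<in>A. k w) = (\<Sum>w\<in>A. 2)" by (intro sum.cong refl) (auto simp: k_def)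
    finally show ?thesis using oneA x1A cA m by (simp add: k_def)
  qed
  have "degree f = degree P + degree c" unfolding c using P0 c0 by (simp add: degree_mult_eq)
  hence "degree c = 0" using df degP by simp
  hence cc: "c = [:coeff c 0:]" by (rule degree_0_id[symmetric])
  define c1 where "c1 = coeff c 0"
  have fP: "poly f x = c1 * poly P x" for x
    unfolding c c1_def by (subst cc) simp
  have polyP: "poly P x = (x - 1) * (x - x1) * (\<Prod>y\<in>A. (x - y)^2)" for x
  proof -
    have "poly P x = (\<Prod>w\<in>N. (x - w)^(k w))" unfolding P_def by (simp add: poly_prod)
    also have "\<dots> = (x - 1)^(k 1) * ((x - x1)^(k x1) * (\<Prod>w\<in>A. (x - w)^(k w)))"
      unfolding NA using oneA x1A finA by simp
    also have "(\<Prod>w\<in>A. (x - w)^(k w)) = (\<Prod>w\<in>A. (x - w)^2)" by (intro prod.cong refl) (auto simp: k_def)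
    finally show ?thesis using oneA x1A by (simp add: k_def mult.assoc)
  qed
  have "\<exists>x. x \<in> {-1<..<x1} - R"
  proof -
    have "infinite {-1<..<x1}" using x1lt by simp
    hence "infinite ({-1<..<x1} - R)" using st(1) by (rule Diff_infinite_finite[rotated])
    then show ?thesis by (metis ex_in_conv finite.emptyI)
  qed
  then obtain x where x: "-1 < x" "x < x1" "x \<notin> R" by auto
  have "(\<Prod>y\<in>A. (x - y)^2) > 0"
  proof (rule prod_pos)
    fix y assume "y \<in> A"
    hence "x \<noteq> y" using x A_def by auto
    then show "(x - y)^2 > 0" by simp
  qed
  moreover have "(x - 1) * (x - x1) > 0" using x x1lt by (simp add: mult_neg_neg)
  ultimately have Px: "poly P x > 0" unfolding polyP by simp
  have "poly f x \<ge> 0" using nn x unfolding x1_def by auto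
  hence "c1 \<ge> 0" using Px fP[of x] by (simp add: zero_le_mult_iff)
  moreover have "c1 \<noteq> 0" using c0 cc unfolding c1_def by (metis pCons_0_0)
  ultimately have "c1 > 0" by simp
  then show ?thesis using fP polyP unfolding x1_def A_def by auto
qed


lemma jacobiP_0: "jacobiP a b 0 x = 1"
  unfolding jacobiP_def by simp

lemma int_W: "a > -1 \<Longrightarrow> b > -1 \<Longrightarrow> integral {-1..1} (jacobi_weight0 a b) = BI a b"
  using beta11' by (rule integral_unique)

lemma jw: "a > -1 \<Longrightarrow> b > -1 \<Longrightarrow> jacobi_weight a b x = jacobi_weight0 a b x / BI a b"
  unfolding jacobi_weight_def by (simp add: int_W)

lemma int_sq: 
  assumes "a > -1" "b > -1"
  shows "integral {-1..1} (\<lambda>t. (jacobiP a b n t)\<^sup>2 * jacobi_weight a b t) = IW a b ((JP a b n)^2) / BI a b"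
proof -
  have "integral {-1..1} (\<lambda>t. (jacobiP a b n t)\<^sup>2 * jacobi_weight a b t)
      = integral {-1..1} (\<lambda>t. poly ((JP a b n)^2) t * jacobi_weight0 a b t / BI a b)"
    using assms by (intro integral_cong) (simp add: jw poly_JP)
  also have "\<dots> = IW a b ((JP a b n)^2) / BI a b"
    unfolding IW_def
    by (intro integral_unique has_integral_divide integrable_integral poly_W_integrable assms)
  finally show ?thesis .
qed

lemma jp0: "a > -1 \<Longrightarrow> b > -1 \<Longrightarrow> jacobi_p a b 0 x = 1"
proof -
  assume ab: "a > -1" "b > -1"
  have "JP a b 0 = 1" unfolding JP_def by simp
  hence "IW a b ((JP a b 0)^2) = BI a b" unfolding IW_def using int_W[OF ab] by simp
  then show ?thesis unfolding jacobi_p_def int_sq[OF ab] using BI_pos[OF ab] by (simp add: jacobiP_0)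
qed

lemma coeff0:
  assumes "a > -1" "b > -1"
  shows "jacobi_coeff a b (poly f) 0 = IW a b f / BI a b"
proof -
  have "jacobi_coeff a b (poly f) 0 = integral {-1..1} (\<lambda>t. poly f t * jacobi_weight0 a b t / BI a b)"
    unfolding jacobi_coeff_def using assms by (intro integral_cong) (simp add: jw jp0)
  also have "\<dots> = IW a b f / BI a b"
    unfolding IW_def
    by (intro integral_unique has_integral_divide integrable_integral poly_W_integrable assms)
  finally show ?thesis .
qed

lemma jpm:
  assumes "a > -1" "b > -1"
  shows "jacobi_p a b m x = poly (JP a b m) x / sqrt (IW a b ((JP a b m)^2) / BI a b)"
  unfolding jacobi_p_def int_sq[OF assms] poly_JP ..

lemma alg:
  fixes C Nn c0 x x1 P1 :: real
  assumes "C \<noteq> 0" "Nn > 0" "x \<noteq> x1"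
  shows "c0 * ((x - 1) * (x - x1) * P1^2) = (c0 * Nn / C^2) * ((1 - x) * ((C * (x - x1) * P1) / sqrt Nn)^2 / (x1 - x))"
proof -
  have s: "(sqrt Nn)^2 = Nn" using assms(2) by simp
  have d: "x1 - x \<noteq> 0" using assms(3) by simp
  have "((C * (x - x1) * P1) / sqrt Nn)^2 = C^2 * ((x1 - x) * (x1 - x)) * P1^2 / Nn"
  proof -
    have "((C * (x - x1) * P1) / sqrt Nn)^2 = (C * (x - x1) * P1)^2 / (sqrt Nn)^2" by (rule power_divide)
    also have "\<dots> = (C * (x - x1) * P1)^2 / Nn" unfolding s ..
    finally show ?thesis by (simp add: power2_eq_square algebra_simps)
  qed
  hence "(1 - x) * ((C * (x - x1) * P1) / sqrt Nn)^2 / (x1 - x) = ((1 - x) * (x1 - x) * P1^2) * (C^2 / Nn)"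
    using d by simp
  hence "(c0 * Nn / C^2) * ((1 - x) * ((C * (x - x1) * P1) / sqrt Nn)^2 / (x1 - x))
      = c0 * ((1 - x) * (x1 - x) * P1^2) * ((Nn / C^2) * (C^2 / Nn))" by simp
  also have "(Nn / C^2) * (C^2 / Nn) = 1" using assms by simp
  finally show ?thesis by (simp add: algebra_simps)
qed


theorem mainTheorem9:
  fixes s \<alpha> \<beta> :: real and m :: nat and f :: "real poly"
  assumes "s = 1 \<or> s = -1"
    and "\<alpha> \<ge> \<beta>" and "\<beta> \<ge> -1/2"
    and "m \<ge> 1"
    and "class_B s \<alpha> \<beta> (poly f)"
    and "f \<noteq> 0"
    and "degree f \<le> 2 * m"
    and "s = 1 \<Longrightarrow> poly f 1 = 0"
  shows "r_I (poly f) \<ge> 1 - jacobi_max_zero (\<alpha> + 1) \<beta> m \<and>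
         (r_I (poly f) = 1 - jacobi_max_zero (\<alpha> + 1) \<beta> m \<longleftrightarrow>
           (\<exists>c>0. \<forall>x. x \<noteq> jacobi_max_zero (\<alpha> + 1) \<beta> m \<longrightarrow>
              poly f x = c * ((1 - x) * (jacobi_p (\<alpha> + 1) \<beta> m x)\<^sup>2
                               / (jacobi_max_zero (\<alpha> + 1) \<beta> m - x))))"
proof -
  have ab: "\<alpha> > -1" "\<beta> > -1" using assms(2,3) by linarith+
  have a1: "\<alpha> + 1 > -1" using ab by simp
  define Q where "Q = JP (\<alpha>+1) \<beta> m"
  define R where "R = {x\<in>{-1<..<1}. poly Q x = 0}"
  define x1 where "x1 = Max R"
  note st = setting[OF ab assms(4), folded Q_def, folded R_def, folded x1_def]
  have jmz: "jacobi_max_zero (\<alpha> + 1) \<beta> m = x1"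
    unfolding jacobi_max_zero_def x1_def st(9)[symmetric] Q_def poly_JP ..
  have IWle: "IW \<alpha> \<beta> f \<le> 0"
  proof -
    have "jacobi_coeff \<alpha> \<beta> (poly f) 0 \<le> 0" using assms(5) unfolding class_B_def by blast
    hence "IW \<alpha> \<beta> f / BI \<alpha> \<beta> \<le> 0" unfolding coeff0[OF ab] .
    then show ?thesis using BI_pos[OF ab] by (simp add: divide_le_0_iff)
  qed
  have f1: "poly f 1 \<ge> 0"
  proof -
    have "s * poly f 1 \<le> 0" using assms(5) unfolding class_B_def by blast
    then show ?thesis using assms(1,8) by auto
  qed
  define S where "S = {r \<in> {0<..2}. \<forall>x\<in>{-1..<1-r}. poly f x \<ge> 0}"
  have rI: "r_I (poly f) = Inf S" unfolding r_I_def S_def ..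
  have S2: "2 \<in> S" unfolding S_def by auto
  have Sne: "S \<noteq> {}" using S2 by blast
  have bdd: "bdd_below S" unfolding S_def by (rule bdd_belowI[of _ 0]) auto
  have part1: "Inf S \<ge> 1 - x1"
  proof (rule cInf_greatest[OF Sne])
    fix r assume r: "r \<in> S"
    show "1 - x1 \<le> r"
    proof (rule ccontr)
      assume "\<not> 1 - x1 \<le> r"
      hence "1 - r > Max R" unfolding x1_def by simp
      moreover have "\<forall>x\<in>{-1..<1-r}. poly f x \<ge> 0" using r unfolding S_def by blast
      ultimately show False
        using keyA[OF ab assms(4) assms(7) IWle f1 assms(6)] unfolding R_def Q_def by blast
    qed
  qed
  have x1b: "-1 < x1" "x1 < 1" using st by auto
  have fwd: "\<exists>c>0. \<forall>x. x \<noteq> x1 \<longrightarrow>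
              poly f x = c * ((1 - x) * (jacobi_p (\<alpha> + 1) \<beta> m x)\<^sup>2 / (x1 - x))"
    if eq: "Inf S = 1 - x1"
  proof -
    have nn: "\<forall>x\<in>{-1..<Max R}. poly f x \<ge> 0"
    proof
      fix x assume x: "x \<in> {-1..<Max R}"
      hence "Inf S < 1 - x" using eq unfolding x1_def by simp
      then obtain r where r: "r \<in> S" "r < 1 - x" using cInf_less_iff[OF Sne bdd] by blast
      hence "x \<in> {-1..<1-r}" using x by auto
      then show "poly f x \<ge> 0" using r(1) unfolding S_def by blast
    qed
    obtain c0 where c0: "c0 > 0" "\<And>x. poly f x = c0 * ((x - 1) * (x - Max R) * (\<Prod>y\<in>R-{Max R}. (x - y)^2))"
      using keyB[OF ab assms(4) assms(7) IWle f1 assms(6)] nn unfolding R_def Q_def by blast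
    obtain C where C: "C \<noteq> 0" "Q = smult C (\<Prod>w\<in>R. [:-w,1:])" using st(10) by blast
    define Nn where "Nn = IW (\<alpha>+1) \<beta> (Q^2) / BI (\<alpha>+1) \<beta>"
    have Q0: "Q \<noteq> 0" unfolding Q_def by (rule JP_nz[OF a1])
    have "IW (\<alpha>+1) \<beta> (Q^2) > 0" unfolding IW_def
      using Q0 by (intro poly_W_integral_pos'[OF a1 ab(2)]) auto
    hence Nn: "Nn > 0" unfolding Nn_def using BI_pos[OF a1 ab(2)] by simp
    have jp: "jacobi_p (\<alpha> + 1) \<beta> m x = poly Q x / sqrt Nn" for x
      unfolding jpm[OF a1 ab(2)] Nn_def Q_def ..
    have x1R: "x1 \<in> R" using st by simp
    have pQ: "poly Q x = C * (x - x1) * (\<Prod>y\<in>R-{x1}. (x - y))" for x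
    proof -
      have "poly Q x = C * (\<Prod>y\<in>R. (x - y))" unfolding C by (simp add: poly_prod)
      also have "(\<Prod>y\<in>R. (x - y)) = (x - x1) * (\<Prod>y\<in>R-{x1}. (x - y))"
        using st(1) x1R by (rule prod.remove)
      finally show ?thesis by simp
    qed
    have pw: "(\<Prod>y\<in>R-{x1}. (x - y)^2) = (\<Prod>y\<in>R-{x1}. (x - y))^2" for x
      by (rule prod_power_distrib[symmetric])
    show ?thesis
    proof (intro exI[of _ "c0 * Nn / C^2"] conjI allI impI)
      show "c0 * Nn / C^2 > 0" using c0(1) Nn C(1) by simp
      fix x assume "x \<noteq> x1"
      have "poly f x = c0 * ((x - 1) * (x - x1) * (\<Prod>y\<in>R-{x1}. (x - y))^2)"
        using c0(2)[of x] unfolding x1_def[symmetric] pw .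
      also have "\<dots> = (c0 * Nn / C^2) * ((1 - x) * ((C * (x - x1) * (\<Prod>y\<in>R-{x1}. (x - y))) / sqrt Nn)^2 / (x1 - x))"
        by (rule alg[OF C(1) Nn \<open>x \<noteq> x1\<close>])
      also have "\<dots> = (c0 * Nn / C^2) * ((1 - x) * (jacobi_p (\<alpha> + 1) \<beta> m x)\<^sup>2 / (x1 - x))"
        unfolding jp pQ ..
      finally show "poly f x = (c0 * Nn / C^2) * ((1 - x) * (jacobi_p (\<alpha> + 1) \<beta> m x)\<^sup>2 / (x1 - x))" .
    qed
  qed
  have bwd: "Inf S = 1 - x1"
    if ex: "\<exists>c>0. \<forall>x. x \<noteq> x1 \<longrightarrow>
              poly f x = c * ((1 - x) * (jacobi_p (\<alpha> + 1) \<beta> m x)\<^sup>2 / (x1 - x))"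
  proof -
    obtain c where c: "c > 0" "\<And>x. x \<noteq> x1 \<Longrightarrow>
              poly f x = c * ((1 - x) * (jacobi_p (\<alpha> + 1) \<beta> m x)\<^sup>2 / (x1 - x))" using ex by blast
    have "1 - x1 \<in> {0<..2}" using x1b by auto
    moreover have "\<forall>x\<in>{-1..<1 - (1 - x1)}. poly f x \<ge> 0"
    proof
      fix x assume x: "x \<in> {-1..<1 - (1 - x1)}"
      hence "x \<noteq> x1" "1 - x > 0" "x1 - x > 0" using x1b by auto
      then show "poly f x \<ge> 0" using c by (simp add: c(2))
    qed
    ultimately have "1 - x1 \<in> S" unfolding S_def by blast
    hence "Inf S \<le> 1 - x1" using bdd by (rule cInf_lower)
    with part1 show ?thesis by simp
  qed
  show ?thesis unfolding rI jmz using part1 fwd bwd by blast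
qed


end
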